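(* Let $\Omega$ be a region of $\mathcal{C}^*_{n,A}$ ($n\ge1$) and let $G_1(\Omega)$ be the graph on $[n]$ in which $\{i,j\}$ ($i\ne j$) is an edge iff $|x_i-x_j|<a_1$ for $\bm x\in\Omega$ (this does not depend on $\bm x\in\Omega$). Then $\mathrm{level}(\Omega)$ equals the number of connected components of $G_1(\Omega)$.
   Context: Let $A=\{a_1,\dots,a_m\}$ with $a_1>\dots>a_m>0$; $\mathcal{C}^*_{n,A}$ is the arrangement in $\mathbb{R}^n$ of hyperplanes $x_i-x_j=a_k$ ($i\ne j$, $1\le k\le m$); regions are connected components of the complement. The level of $X\subseteq\mathbb{R}^n$ is the smallest integer $\ell\ge0$ such that there are a linear subspace $W$ of dimension $\ell$ and $r>0$ with $X\subseteq\{\bm x:\min_{\bm y\in W}\|\bm x-\bm y\|\le r\}$. ($G_1(\Omega)$ is the incomparability graph of the interval order on $[n]$ given by $i<j$ iff $[x_i-a_1,x_i]$ lies entirely left of $[x_j-a_1,x_j]$.) *)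

theory Defs
  imports "HOL-Analysis.Analysis"
begin

text \<open>Union of the hyperplanes x_i - x_j = a (i \<noteq> j, a \<in> A) of the arrangement C*_{n,A},
  coordinates indexed by the finite type 'n (so n = CARD('n) \<ge> 1).\<close>
definition arr_hyperplanes :: "real set \<Rightarrow> (real ^ 'n) set" where
  "arr_hyperplanes A = {x. \<exists>i j a. i \<noteq> j \<and> a \<in> A \<and> x $ i - x $ j = a}"

definition arr_regions :: "real set \<Rightarrow> (real ^ 'n) set set" where
  "arr_regions A = components (UNIV - arr_hyperplanes A)"

definition level :: "('a::euclidean_space) set \<Rightarrow> nat" where
  "level X = (LEAST l. \<exists>W. subspace W \<and> dim W = l \<and>
      (\<exists>r>0. \<forall>x\<in>X. infdist x W \<le> r))"

text \<open>The graph G_1(Omega) on the index set: i,j adjacent iff i \<noteq> j and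
  |x_i - x_j| < a_1 for a (chosen) point x of Omega; a_1 = Max A.\<close>
definition G1 :: "real set \<Rightarrow> (real ^ 'n) set \<Rightarrow> 'n \<Rightarrow> 'n \<Rightarrow> bool" where
  "G1 A \<Omega> i j = (let x = (SOME x. x \<in> \<Omega>) in i \<noteq> j \<and> \<bar>x $ i - x $ j\<bar> < Max A)"

definition num_components :: "'a set \<Rightarrow> ('a \<Rightarrow> 'a \<Rightarrow> bool) \<Rightarrow> nat" where
  "num_components V E =
     card (V // {(u, v). u \<in> V \<and> v \<in> V \<and> (\<lambda>a b. a \<in> V \<and> b \<in> V \<and> E a b)\<^sup>*\<^sup>* u v})"

end

theory Submission
  imports Defs
begin

lemma comp_absorb:
  assumes "C \<in> components S" "D \<subseteq> S" "connected D" "p \<in> C" "p \<in> D"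
  shows "D \<subseteq> C"
proof -
  have c: "C \<noteq> {} \<and> C \<subseteq> S \<and> connected C \<and> (\<forall>D. D \<noteq> {} \<and> C \<subseteq> D \<and> D \<subseteq> S \<and> connected D \<longrightarrow> D = C)"
    using assms(1) unfolding in_components_maximal by assumption
  have cc: "connected C" "C \<subseteq> S" using c by simp_all
  have m: "\<And>D. D \<noteq> {} \<Longrightarrow> C \<subseteq> D \<Longrightarrow> D \<subseteq> S \<Longrightarrow> connected D \<Longrightarrow> D = C"
    using c by simp
  have "connected (C \<union> D)" using cc assms(3,4,5) connected_Un[of C D] by blast
  moreover have "C \<union> D \<subseteq> S" using cc assms(2) by simp
  ultimately have "C \<union> D = C" using m[of "C \<union> D"] assms(4) by blast
  then show ?thesis by blast
qed

lemma key_edge: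
  fixes A :: "real set" and \<Omega> :: "(real ^ 'n) set"
  assumes "\<Omega> \<in> arr_regions A" "p \<in> \<Omega>" "x \<in> \<Omega>" "i \<noteq> j" "a1 \<in> A"
    "\<bar>p$i - p$j\<bar> < a1"
  shows "\<bar>x$i - x$j\<bar> < a1"
proof (rule ccontr)
  assume nc: "\<not> ?thesis"
  let ?f = "\<lambda>x::real^'n. x$i - x$j"
  have sub: "\<Omega> \<subseteq> UNIV - arr_hyperplanes A"
    using assms(1) in_components_subset unfolding arr_regions_def by blast
  have conn: "connected \<Omega>" using assms(1) in_components_connected unfolding arr_regions_def by blast
  have "continuous_on \<Omega> ?f" by (intro continuous_intros)
  then have cf: "connected (?f ` \<Omega>)" using conn connected_continuous_image by blast
  have fp: "?f p \<in> ?f ` \<Omega>" "?f x \<in> ?f ` \<Omega>" using assms by auto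
  show False
  proof (cases "?f x \<ge> a1")
    case True
    then have "a1 \<in> {?f p..?f x}" using assms(6) by auto
    then have "a1 \<in> ?f ` \<Omega>" using connected_contains_Icc[OF cf fp] by blast
    then obtain z where z: "z \<in> \<Omega>" "z$i - z$j = a1" by auto
    have "z \<in> arr_hyperplanes A" unfolding arr_hyperplanes_def
      using z(2) assms(4,5) by (intro CollectI exI[of _ i] exI[of _ j] exI[of _ a1]) simp
    then show False using sub z(1) by blast
  next
    case False
    then have "?f x \<le> - a1" using nc by auto
    then have "-a1 \<in> {?f x..?f p}" using assms(6) by auto
    then have "-a1 \<in> ?f ` \<Omega>" using connected_contains_Icc[OF cf fp(2) fp(1)] by blast
    then obtain z where z: "z \<in> \<Omega>" "z$j - z$i = a1" by auto
    have "z \<in> arr_hyperplanes A" unfolding arr_hyperplanes_def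
      using z(2) assms(4,5) by (intro CollectI exI[of _ j] exI[of _ i] exI[of _ a1]) simp
    then show False using sub z(1) by blast
  qed
qed

theorem theorem3p4:
  fixes A :: "real set" and \<Omega> :: "(real ^ 'n) set"
  assumes "finite A" and "A \<noteq> {}" and "\<forall>a\<in>A. a > 0"
    and "\<Omega> \<in> arr_regions A"
  shows "level \<Omega> = num_components (UNIV :: 'n set) (G1 A \<Omega>)"
proof -
  define a1 where "a1 = Max A"
  have a1A: "a1 \<in> A" using assms(1,2) a1_def by simp
  have a1pos: "a1 > 0" using a1A assms(3) by auto
  have a1max: "\<And>a. a \<in> A \<Longrightarrow> a \<le> a1" using assms(1) a1_def by simp
  define S :: "(real^'n) set" where "S = UNIV - arr_hyperplanes A"
  have comp: "\<Omega> \<in> components S" using assms(4) unfolding S_def arr_regions_def .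
  have sub: "\<Omega> \<subseteq> S" using comp in_components_subset by blast
  define p where "p = (SOME x. x \<in> \<Omega>)"
  have One: "\<Omega> \<noteq> {}" using comp in_components_nonempty by blast
  have pO: "p \<in> \<Omega>" unfolding p_def using One by (simp add: some_in_eq)
  have pS: "p$i - p$j \<noteq> a" if ij: "i \<noteq> j" and a: "a \<in> A" for i j a
  proof
    assume eq: "p$i - p$j = a"
    have "p \<in> arr_hyperplanes A" unfolding arr_hyperplanes_def
      using eq ij a by (intro CollectI exI[of _ i] exI[of _ j] exI[of _ a]) simp
    then show False using sub pO unfolding S_def by blast
  qed
  define E where "E = (\<lambda>i j::'n. i \<noteq> j \<and> \<bar>p$i - p$j\<bar> < a1)"
  have GE: "G1 A \<Omega> = E" unfolding G1_def E_def p_def a1_def Let_def by (rule refl)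
  define R where "R = {(u::'n, v). E\<^sup>*\<^sup>* u v}"
  have NC: "num_components (UNIV :: 'n set) (G1 A \<Omega>) = card (UNIV // R)"
    unfolding num_components_def GE R_def by simp
  have symE: "symp E" unfolding E_def symp_def by (auto simp: abs_minus_commute)
  have eqR: "equiv UNIV R"
  proof -
    have "symp E\<^sup>*\<^sup>*" using symE symp_rtranclp by blast
    then show ?thesis unfolding equiv_def refl_on_def sym_def trans_def R_def
      by (auto dest: sympD)
  qed
  define Q where "Q = (UNIV :: 'n set) // R"
  have finQ: "finite Q" unfolding Q_def by (simp add: finite_quotient)
  have clsame: "\<And>K L x y. K \<in> Q \<Longrightarrow> L \<in> Q \<Longrightarrow> x \<in> K \<Longrightarrow> y \<in> L \<Longrightarrow> E\<^sup>*\<^sup>* x y \<Longrightarrow> K = L"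
    using quotient_eq_iff[OF eqR] unfolding Q_def R_def by blast
  have clsame2: "\<And>K L x y. K \<in> Q \<Longrightarrow> L \<in> Q \<Longrightarrow> x \<in> K \<Longrightarrow> y \<in> L \<Longrightarrow> K = L \<Longrightarrow> E\<^sup>*\<^sup>* x y"
    using quotient_eq_iff[OF eqR] unfolding Q_def R_def by blast
  have clI: "\<And>i. R``{i} \<in> Q" unfolding Q_def by (rule quotientI) simp
  have clmem: "\<And>i. i \<in> R``{i}" unfolding R_def by simp
  have clne: "\<And>K. K \<in> Q \<Longrightarrow> K \<noteq> {}" unfolding Q_def using eqR
    by (metis in_quotient_imp_non_empty)
  have keyE: "\<And>x i j. x \<in> \<Omega> \<Longrightarrow> E i j \<Longrightarrow> \<bar>x$i - x$j\<bar> < a1"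
    using key_edge[OF assms(4) pO _ _ a1A] unfolding E_def by blast
  have pow: "\<And>m i j x. (E ^^ m) i j \<Longrightarrow> x \<in> \<Omega> \<Longrightarrow> \<bar>x$i - x$j\<bar> \<le> real m * a1"
  proof -
    fix m i j x
    assume "(E ^^ m) i j" "x \<in> \<Omega>"
    then show "\<bar>x$i - x$j\<bar> \<le> real m * a1"
    proof (induction m arbitrary: j)
      case 0 then show ?case by simp
    next
      case (Suc m)
      then obtain k where k: "(E ^^ m) i k" "E k j" by auto
      have "\<bar>x$i - x$k\<bar> \<le> real m * a1" using Suc k by blast
      moreover have "\<bar>x$k - x$j\<bar> < a1" using keyE Suc k by blast
      ultimately show ?case by (simp add: algebra_simps)
    qed
  qed
  define nn where "nn = (\<lambda>ij::'n\<times>'n. SOME m. (E ^^ m) (fst ij) (snd ij))"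
  define B where "B = (\<Sum>ij\<in>UNIV. real (nn ij) * a1)"
  have Bbd: "\<And>i j x. E\<^sup>*\<^sup>* i j \<Longrightarrow> x \<in> \<Omega> \<Longrightarrow> \<bar>x$i - x$j\<bar> \<le> B"
  proof -
    fix i j x assume r: "E\<^sup>*\<^sup>* i j" and x: "x \<in> \<Omega>"
    have "(E ^^ nn (i,j)) i j" unfolding nn_def using rtranclp_imp_relpowp[OF r]
      by (simp add: someI_ex) (rule someI_ex)
    then have "\<bar>x$i - x$j\<bar> \<le> real (nn (i,j)) * a1" using pow x by blast
    also have "\<dots> \<le> B" unfolding B_def
      by (rule member_le_sum) (use a1pos in auto)
    finally show "\<bar>x$i - x$j\<bar> \<le> B" .
  qed
  have B0: "B \<ge> 0" unfolding B_def using a1pos by (intro sum_nonneg) auto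
  define ind where "ind = (\<lambda>K::'n set. (\<chi> i. if i \<in> K then 1 else 0) :: real^'n)"
  define W0 where "W0 = span (ind ` Q)"
  define rep where "rep = (\<lambda>K::'n set. SOME k. k \<in> K)"
  have repK: "\<And>K. K \<in> Q \<Longrightarrow> rep K \<in> K" unfolding rep_def using clne by (simp add: some_in_eq)
  have W0good: "\<exists>r>0. \<forall>x\<in>\<Omega>. infdist x W0 \<le> r"
  proof (intro exI[of _ "real CARD('n) * B + 1"] conjI ballI)
    show "real CARD('n) * B + 1 > 0" using B0 by (simp add: add_nonneg_pos)
    fix x assume x: "x \<in> \<Omega>"
    define y where "y = (\<Sum>K\<in>Q. (x $ rep K) *\<^sub>R ind K)"
    have yW: "y \<in> W0" unfolding y_def W0_def
      by (intro span_sum span_mul span_base) auto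
    have yi: "y $ i = x $ rep (R``{i})" for i
    proof -
      have "y $ i = (\<Sum>K\<in>Q. x $ rep K * (if i \<in> K then 1 else 0))"
        unfolding y_def ind_def by (simp add: sum_component)
      also have "\<dots> = (\<Sum>K\<in>Q. if K = R``{i} then x $ rep K else 0)"
      proof (rule sum.cong[OF refl])
        fix K assume K: "K \<in> Q"
        have "i \<in> K \<longleftrightarrow> K = R``{i}" using clsame[OF K clI _ clmem] clmem by blast
        then show "x $ rep K * (if i \<in> K then 1 else 0) = (if K = R``{i} then x $ rep K else 0)"
          by auto
      qed
      also have "\<dots> = x $ rep (R``{i})" using finQ clI by (simp add: sum.delta)
      finally show ?thesis .
    qed
    have "infdist x W0 \<le> dist x y" using yW infdist_le by blast
    also have "\<dots> = norm (x - y)" by (simp add: dist_norm)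
    also have "\<dots> \<le> (\<Sum>i\<in>UNIV. \<bar>(x - y)$i\<bar>)" by (rule norm_le_l1_cart)
    also have "\<dots> \<le> (\<Sum>i\<in>(UNIV::'n set). B)"
    proof (rule sum_mono)
      fix i :: 'n
      have "E\<^sup>*\<^sup>* i (rep (R``{i}))"
        using clsame2[OF clI clI clmem repK[OF clI]] by blast
      then show "\<bar>(x - y)$i\<bar> \<le> B" using Bbd x yi by simp
    qed
    also have "\<dots> = real CARD('n) * B" by simp
    finally show "infdist x W0 \<le> real CARD('n) * B + 1" by simp
  qed
  have dimW0: "dim W0 \<le> card Q"
  proof -
    have "dim W0 \<le> card (ind ` Q)" unfolding W0_def
      by (rule dim_le_card) (auto simp: finQ)
    also have "\<dots> \<le> card Q" using finQ card_image_le by blast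
    finally show ?thesis .
  qed
  have ex0: "\<exists>W. subspace W \<and> dim W = dim W0 \<and> (\<exists>r>0. \<forall>x\<in>\<Omega>. infdist x W \<le> r)"
    using W0good unfolding W0_def by (auto intro: subspace_span)
  have le1: "level \<Omega> \<le> card Q"
    using Least_le[of "\<lambda>l. \<exists>W. subspace W \<and> dim W = l \<and> (\<exists>r>0. \<forall>x\<in>\<Omega>. infdist x W \<le> r)" "dim W0", OF ex0] dimW0
    unfolding level_def by linarith
  define P where "P = (\<lambda>l. \<exists>W. subspace W \<and> dim W = l \<and> (\<exists>r>0. \<forall>x\<in>\<Omega>. infdist x W \<le> r))"
  have lev: "level \<Omega> = (LEAST l. P l)" unfolding level_def P_def by (rule refl)
  have "P (dim W0)" unfolding P_def by (rule ex0)
  then have "P (LEAST l. P l)" by (rule LeastI)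
  then obtain W where W: "subspace W" "dim W = level \<Omega>" "\<exists>r>0. \<forall>x\<in>\<Omega>. infdist x W \<le> r"
    unfolding P_def lev by blast
  obtain r where r: "r > 0" "\<forall>x\<in>\<Omega>. infdist x W \<le> r" using W(3) by blast
  have Wne: "W \<noteq> {}" using W(1) subspace_0 by blast
  define T where "T = {s. \<exists>k. s = p$k \<and> (\<forall>j. p$j < s \<longrightarrow> s - p$j > a1)}"
  define v where "v = (\<lambda>s::real. (\<chi> i. if s \<le> p$i then 1 else 0) :: real^'n)"
  have finT: "finite T"
  proof -
    have "T \<subseteq> range (\<lambda>k. p$k)" unfolding T_def by auto
    then show ?thesis by (rule finite_subset) simp
  qed
  have vW: "v s \<in> W" if s: "s \<in> T" for s
  proof -
    let ?ray = "(\<lambda>t. p + t *\<^sub>R v s) ` {0..}"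
    have cray: "connected ?ray"
      by (intro connected_continuous_image continuous_intros connected_Ici)
    have gap: "\<And>j. p$j < s \<Longrightarrow> s - p$j > a1" using s unfolding T_def by blast
    have rayS: "?ray \<subseteq> S"
    proof
      fix z assume "z \<in> ?ray"
      then obtain t where t: "t \<ge> 0" "z = p + t *\<^sub>R v s" by auto
      have "z $ i - z $ j \<noteq> a" if ij: "i \<noteq> j" and a: "a \<in> A" for i j a
      proof -
        have zc: "z $ k = p $ k + t * (if s \<le> p$k then 1 else 0)" for k
          using t unfolding v_def by simp
        have apos: "a > 0" using a assms(3) by auto
        have ale: "a \<le> a1" using a1max a by blast
        show ?thesis
        proof (cases "s \<le> p$i"; cases "s \<le> p$j")
          assume "s \<le> p$i" "s \<le> p$j" then show ?thesis using zc pS ij a by simp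
        next
          assume "\<not> s \<le> p$i" "\<not> s \<le> p$j" then show ?thesis using zc pS ij a by simp
        next
          assume h: "s \<le> p$i" "\<not> s \<le> p$j"
          then have "s - p$j > a1" using gap by simp
          then show ?thesis using zc h t(1) ale by simp
        next
          assume h: "\<not> s \<le> p$i" "s \<le> p$j"
          then have "s - p$i > a1" using gap by simp
          then show ?thesis using zc h t(1) ale a1pos apos by simp
        qed
      qed
      then show "z \<in> S" unfolding S_def arr_hyperplanes_def by auto
    qed
    have "p \<in> ?ray" by (rule image_eqI[of _ _ 0]) auto
    then have rayO: "?ray \<subseteq> \<Omega>" using comp_absorb[OF comp rayS cray pO] by blast
    show ?thesis
    proof -
      have "\<exists>y\<in>W. dist y (v s) < e" if e: "e > 0" for e
      proof -
        define t where "t = (r + norm p) / e + 1"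
        have tpos: "t > 0" unfolding t_def using r e by (simp add: add_nonneg_pos)
        have xO: "p + t *\<^sub>R v s \<in> \<Omega>" using rayO tpos by (intro subsetD[OF rayO] imageI) simp
        obtain w where w: "w \<in> W" "infdist (p + t *\<^sub>R v s) W = dist (p + t *\<^sub>R v s) w"
          using infdist_attains_inf[OF closed_subspace[OF W(1)] Wne] by blast
        have dw: "norm (p + t *\<^sub>R v s - w) \<le> r" using r(2) xO w by (metis dist_norm)
        have "norm (t *\<^sub>R v s - w) \<le> norm (p + t *\<^sub>R v s - w) + norm p"
          using norm_triangle_ineq4[of "p + t *\<^sub>R v s - w" p] by (simp add: algebra_simps)
        then have n1: "norm (t *\<^sub>R v s - w) \<le> r + norm p" using dw by simp
        have "(1/t) *\<^sub>R w \<in> W" using W(1) w(1) subspace_scale by blast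
        moreover have "dist ((1/t) *\<^sub>R w) (v s) < e"
        proof -
          have "dist ((1/t) *\<^sub>R w) (v s) = norm ((1/t) *\<^sub>R (t *\<^sub>R v s - w))"
          proof -
            have "(1/t) *\<^sub>R (t *\<^sub>R v s - w) = v s - (1/t) *\<^sub>R w"
              using tpos by (simp add: scaleR_diff_right scaleR_scaleR)
            then show ?thesis unfolding dist_norm by (metis norm_minus_commute)
          qed
          also have "\<dots> = norm (t *\<^sub>R v s - w) / t" using tpos by simp
          also have "\<dots> \<le> (r + norm p) / t" using n1 tpos by (simp add: divide_right_mono)
          also have "\<dots> < e"
          proof -
            have "r + norm p < e * t" unfolding t_def using e r by (simp add: field_simps)
            then show ?thesis using tpos by (simp add: field_simps)
          qed
          finally show ?thesis .
        qed
        ultimately show ?thesis by blast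
      qed
      then show ?thesis using closed_approachable[OF closed_subspace[OF W(1)]] by blast
    qed
  qed
  have injv: "inj_on v T"
  proof (rule inj_onI)
    fix s s' assume ss: "s \<in> T" "s' \<in> T" "v s = v s'"
    show "s = s'"
    proof (rule ccontr)
      assume ne: "s \<noteq> s'"
      { fix s s' assume ss: "s \<in> T" "s' \<in> T" "v s = v s'" "s < s'"
        obtain k where k: "s = p$k" using ss unfolding T_def by blast
        have "v s $ k = 1" "v s' $ k = 0" using k ss(4) unfolding v_def by auto
        then have False using ss(3) by simp }
      then show False using ss ne by (metis linorder_neq_iff)
    qed
  qed
  have indep: "independent (v ` T)"
    unfolding eucl.independent_explicit
  proof (intro conjI allI impI ballI)
    show "finite (v ` T)" using finT by simp
    fix c u assume sum0: "(\<Sum>u\<in>v ` T. c u *\<^sub>R u) = 0" and u: "u \<in> v ` T"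
    show "c u = 0"
    proof (rule ccontr)
      assume cu: "c u \<noteq> 0"
      define S' where "S' = {s\<in>T. c (v s) \<noteq> 0}"
      have S'ne: "S' \<noteq> {}" using u cu S'_def by auto
      have finS': "finite S'" using finT S'_def by simp
      define s0 where "s0 = Min S'"
      have s0S: "s0 \<in> S'" using S'ne finS' s0_def by simp
      have s0min: "\<And>s. s \<in> S' \<Longrightarrow> s0 \<le> s" using finS' s0_def by simp
      obtain k where k: "s0 = p$k" using s0S unfolding S'_def T_def by blast
      have "0 = (\<Sum>u\<in>v ` T. c u *\<^sub>R u) $ k" using sum0 by simp
      also have "\<dots> = (\<Sum>s\<in>T. c (v s) * (v s $ k))"
        by (simp add: sum.reindex[OF injv] sum_component)
      also have "\<dots> = (\<Sum>s\<in>T. if s = s0 then c (v s0) else 0)"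
      proof (rule sum.cong[OF refl])
        fix s assume sT: "s \<in> T"
        show "c (v s) * (v s $ k) = (if s = s0 then c (v s0) else 0)"
        proof (cases "s = s0")
          case True then show ?thesis using k unfolding v_def by simp
        next
          case False
          show ?thesis
          proof (cases "c (v s) = 0")
            case True then show ?thesis using False by simp
          next
            case c0: False
            then have "s \<in> S'" using sT S'_def by simp
            then have "s > s0" using s0min False by force
            then show ?thesis using k False unfolding v_def by simp
          qed
        qed
      qed
      also have "\<dots> = c (v s0)" using finT s0S S'_def by (simp add: sum.delta)
      finally show False using s0S S'_def by simp
    qed
  qed
  have cardT: "card T \<le> level \<Omega>"
  proof -
    have "card (v ` T) \<le> dim W"
      using independent_card_le_dim[OF _ indep] vW by blast
    then show ?thesis using card_image[OF injv] W(2) by simp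
  qed
  define g where "g = (\<lambda>K::'n set. Min ((\<lambda>i. p$i) ` K))"
  have gK: "\<exists>k\<in>K. g K = p$k \<and> (\<forall>j\<in>K. p$k \<le> p$j)" if K: "K \<in> Q" for K
  proof -
    have "finite ((\<lambda>i. p$i) ` K)" by simp
    moreover have "(\<lambda>i. p$i) ` K \<noteq> {}" using clne K by simp
    ultimately have "g K \<in> (\<lambda>i. p$i) ` K" "\<forall>j\<in>K. g K \<le> p$j" unfolding g_def by auto
    then show ?thesis by auto
  qed
  have gT: "g K \<in> T" if K: "K \<in> Q" for K
  proof -
    obtain k where k: "k \<in> K" "g K = p$k" "\<forall>j\<in>K. p$k \<le> p$j" using gK K by blast
    have "p$k - p$j > a1" if j: "p$j < p$k" for j
    proof (rule ccontr)
      assume "\<not> ?thesis"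
      moreover have "j \<noteq> k" using j by auto
      moreover have "p$k - p$j \<noteq> a1" using pS a1A \<open>j \<noteq> k\<close> by metis
      ultimately have "E k j" unfolding E_def using j by auto
      then have "K = R``{j}" using clsame[OF K clI k(1) clmem] by blast
      then have "j \<in> K" using clmem by simp
      then show False using k(3) j by force
    qed
    then show ?thesis unfolding T_def using k by auto
  qed
  have injg: "inj_on g Q"
  proof (rule inj_onI)
    fix K L assume KL: "K \<in> Q" "L \<in> Q" "g K = g L"
    obtain k where k: "k \<in> K" "g K = p$k" using gK KL by blast
    obtain l where l: "l \<in> L" "g L = p$l" using gK KL by blast
    have "E\<^sup>*\<^sup>* k l"
    proof (cases "k = l")
      case True then show ?thesis by simp
    next
      case False
      then have "E k l" unfolding E_def using k l KL a1pos by simp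
      then show ?thesis by simp
    qed
    then show "K = L" using clsame[OF KL(1,2) k(1) l(1)] by blast
  qed
  have "card Q \<le> card T" using card_inj_on_le[OF injg _ finT] gT by blast
  then have "card Q \<le> level \<Omega>" using cardT by simp
  then show ?thesis using le1 NC Q_def by simp
qed

end
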